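(* Let $$z=e^{1/2}\int_0^1 \frac{e^{-1/(2t^2)}}{t^2}\,dt .$$ For $N\ge1$ let $$R_N=\cfrac{1}{1+\cfrac{1}{1+\cfrac{2}{\ddots\,1+\cfrac{N-1}{1+N}}}}$$ (partial numerators $1,2,\dots,N$). Then $R_N\to z$ as $N\to\infty$, that is, $$z=\cfrac{1}{1+\cfrac{1}{1+\cfrac{2}{1+\cfrac{3}{1+\cfrac{4}{1+\cfrac{5}{1+\cdots}}}}}} .$$
   Context: $z$ is the value the paper assigns to the divergent series $1-1+1\cdot3-1\cdot3\cdot5+1\cdot3\cdot5\cdot7-\cdots$. *)

theory Defs
  imports "HOL-Analysis.Analysis"
begin

text \<open>Tail of the continued fraction: cf_tail N k is
  1 + k/(1 + (k+1)/( ... (N-1)/(1+N))) for 1 \<le> k < N, and cf_tail N N = 1 + N.\<close>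
function cf_tail :: "nat \<Rightarrow> nat \<Rightarrow> real" where
  "cf_tail N k = (if N \<le> k then 1 + real N else 1 + real k / cf_tail N (Suc k))"
  by auto
termination by (relation "Wellfounded.measure (\<lambda>(N, k). N - k)") auto

definition R :: "nat \<Rightarrow> real" where
  "R N = 1 / cf_tail N 1"

definition z :: real where
  "z = exp (1/2) * integral {0..1} (\<lambda>t::real. exp (- 1 / (2 * t^2)) / t^2)"

end

theory Submission imports Defs "HOL-Real_Asymp.Real_Asymp" begin

lemma flat0: "((\<lambda>t::real. exp (-1/(2*t^2)) / t^n) \<longlongrightarrow> 0) (at_right 0)"
proof -
  have L1: "((\<lambda>y::real. y^n / exp y) \<longlongrightarrow> 0) at_top" by (rule tendsto_power_div_exp_0)
  have L2: "filterlim (\<lambda>t::real. 1/(2*t^2)) at_top (at_right 0)" by real_asymp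
  have L3: "((\<lambda>t. 2^n * ((1/(2*t^2))^n / exp(1/(2*t^2)))) \<longlongrightarrow> 0) (at_right (0::real))"
    using tendsto_mult_right_zero[OF filterlim_compose[OF L1 L2], of "2^n"] by simp
  have ev: "eventually (\<lambda>t::real. t \<in> {0<..<1}) (at_right 0)" by (rule eventually_at_right_real) simp
  show ?thesis
  proof (rule tendsto_sandwich[OF _ _ tendsto_const L3])
    show "eventually (\<lambda>t::real. 0 \<le> exp (-1/(2*t^2)) / t^n) (at_right 0)"
      using ev by eventually_elim simp
    show "eventually (\<lambda>t::real. exp (-1/(2*t^2)) / t^n \<le> 2^n * ((1/(2*t^2))^n / exp(1/(2*t^2)))) (at_right 0)"
      using ev
    proof eventually_elim
      case (elim t)
      then have t: "0 < t" "t < 1" by auto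
      have "2^n * ((1/(2*t^2))^n / exp(1/(2*t^2))) = exp (-1/(2*t^2)) / t^(2*n)"
        using t by (simp add: power_mult_distrib power_mult exp_minus field_simps power2_eq_square)
      moreover have "t^(2*n) \<le> t^n" using t by (intro power_decreasing) auto
      then have "exp (-1/(2*t^2)) / t^n \<le> exp (-1/(2*t^2)) / t^(2*n)"
        using t by (intro divide_left_mono) auto
      ultimately show ?case by simp
    qed
  qed
qed

lemma flatk: "((\<lambda>t::real. (1/t-1)^k * exp (-1/(2*t^2)) / t^m) \<longlongrightarrow> 0) (at_right 0)"
proof -
  have ev: "eventually (\<lambda>t::real. t \<in> {0<..<1}) (at_right 0)" by (rule eventually_at_right_real) simp
  show ?thesis
  proof (rule tendsto_sandwich[OF _ _ tendsto_const flat0[of "k+m"]])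
    show "eventually (\<lambda>t::real. 0 \<le> (1/t-1)^k * exp (-1/(2*t^2)) / t^m) (at_right 0)"
      using ev by eventually_elim (simp add: field_simps)
    show "eventually (\<lambda>t::real. (1/t-1)^k * exp (-1/(2*t^2)) / t^m \<le> exp (-1/(2*t^2)) / t^(k+m)) (at_right 0)"
      using ev
    proof eventually_elim
      case (elim t)
      then have t: "0 < t" "t < 1" by auto
      have "(1/t-1)^k \<le> (1/t)^k" using t by (intro power_mono) (auto simp: field_simps)
      then have "(1/t-1)^k * exp (-1/(2*t^2)) / t^m \<le> (1/t)^k * exp (-1/(2*t^2)) / t^m"
        using t by (intro divide_right_mono mult_right_mono) auto
      also have "\<dots> = exp (-1/(2*t^2)) / t^(k+m)" using t by (simp add: power_add field_simps)
      finally show ?case .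
    qed
  qed
qed

definition phi :: "nat \<Rightarrow> real \<Rightarrow> real" where
  "phi k t = (1/t - 1)^k * exp (-1/(2*t^2)) / t^2"

definition Hf :: "nat \<Rightarrow> real \<Rightarrow> real" where
  "Hf k t = (if t = 0 then 0 else (1/t - 1)^k * exp (-1/(2*t^2)))"

lemma isCont_phi: "t \<noteq> 0 \<Longrightarrow> isCont (phi k) t"
  unfolding phi_def by (intro continuous_intros) auto

lemma cont_phi: "continuous_on {0..1} (phi k)"
proof (rule continuous_on_IccI)
  show "(phi k \<longlongrightarrow> phi k 0) (at_right 0)"
    using flatk[of k 2] by (simp add: phi_def[abs_def])
  show "(phi k \<longlongrightarrow> phi k 1) (at_left 1)"
    using isCont_phi[of 1 k] unfolding isCont_def filterlim_at_split by simp
  show "phi k \<midarrow>x\<rightarrow> phi k x" if "0 < x" "x < 1" for x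
    using isCont_phi[of x k] that by (simp add: isCont_def)
qed auto

lemma int_phi: "phi k integrable_on {0..1}"
  by (rule integrable_continuous_real[OF cont_phi])

lemma cont_Hf: "continuous_on {0..1} (Hf k)"
proof (rule continuous_on_IccI)
  have "((\<lambda>t::real. (1/t-1)^k * exp (-1/(2*t^2)) / t^0) \<longlongrightarrow> 0) (at_right 0)" by (rule flatk)
  then have "((\<lambda>t::real. (1/t-1)^k * exp (-1/(2*t^2))) \<longlongrightarrow> 0) (at_right 0)" by simp
  moreover have "eventually (\<lambda>t::real. (1/t-1)^k * exp (-1/(2*t^2)) = Hf k t) (at_right 0)"
    using eventually_at_right_less[of "0::real"] by eventually_elim (auto simp: Hf_def)
  ultimately have "(Hf k \<longlongrightarrow> 0) (at_right 0)" by (rule tendsto_cong[THEN iffD1, rotated])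
  then show "(Hf k \<longlongrightarrow> Hf k 0) (at_right 0)" by (simp add: Hf_def)
  have c: "isCont (Hf k) x" if "0 < x" for x
  proof -
    have "isCont (\<lambda>t::real. (1/t-1)^k * exp (-1/(2*t^2))) x" using that by (intro continuous_intros) auto
    moreover have "eventually (\<lambda>t. (1/t-1)^k * exp (-1/(2*t^2)) = Hf k t) (nhds x)"
      using eventually_nhds_in_open[of "{0<..}" x] that by (auto elim!: eventually_mono simp: Hf_def)
    ultimately show ?thesis by (rule isCont_cong[THEN iffD1, rotated])
  qed
  show "(Hf k \<longlongrightarrow> Hf k 1) (at_left 1)"
    using c[of 1] unfolding isCont_def filterlim_at_split by simp
  show "Hf k \<midarrow>x\<rightarrow> Hf k x" if "0 < x" "x < 1" for x
    using c[of x] that by (simp add: isCont_def)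
qed auto

lemma deriv_H:
  assumes x: "0 < x"
  shows "(Hf k has_field_derivative (phi (Suc k) x + phi k x - real k * phi (k-1) x)) (at x)"
proof -
  have d: "((\<lambda>t. (1/t-1)^k * exp(-1/(2*t^2))) has_field_derivative
     (real k * (1/x-1)^(k-1) * (-1/x^2) * exp(-1/(2*x^2)) + (1/x-1)^k * (exp(-1/(2*x^2)) * (1/x^3)))) (at x)"
    using x by (auto intro!: derivative_eq_intros simp: field_simps power2_eq_square power3_eq_cube)
  define w where "w = 1/x - 1"
  have w1: "w + 1 = 1/x" by (simp add: w_def)
  define E where "E = exp(-1/(2*x^2))"
  have "w^k * (E * (1/x^3)) = w^(Suc k)*E/x^2 + w^k*E/x^2"
  proof -
    have "w^(Suc k)*E/x^2 + w^k*E/x^2 = w^k * (w+1) * E / x^2" by (simp add: add_divide_distrib algebra_simps)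
    also have "\<dots> = w^k * (1/x) * E / x^2" by (simp only: w1)
    also have "\<dots> = w^k * (E * (1/x^3))" using x by (simp add: power2_eq_square power3_eq_cube)
    finally show ?thesis by simp
  qed
  then have eq: "real k * (1/x-1)^(k-1) * (-1/x^2) * exp(-1/(2*x^2)) + (1/x-1)^k * (exp(-1/(2*x^2)) * (1/x^3))
     = phi (Suc k) x + phi k x - real k * phi (k-1) x"
    unfolding phi_def w_def[symmetric] E_def[symmetric] by (simp add: field_simps)
  show ?thesis
    by (rule has_field_derivative_transform_within_open[OF d[unfolded eq], of "{0<..}"])
       (use x in \<open>auto simp: Hf_def\<close>)
qed

lemma ftc_k: "((\<lambda>t. phi (Suc k) t + phi k t - real k * phi (k-1) t) has_integral (0^k * exp (-1/2))) {0..1}"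
proof -
  have "((\<lambda>t. phi (Suc k) t + phi k t - real k * phi (k-1) t) has_integral (Hf k 1 - Hf k 0)) {0..1}"
  proof (rule fundamental_theorem_of_calculus_interior)
    fix x :: real assume "x \<in> {0<..<1}"
    then have "0 < x" by simp
    from deriv_H[OF this, of k] show "(Hf k has_vector_derivative (phi (Suc k) x + phi k x - real k * phi (k-1) x)) (at x)"
      by (simp only: has_real_derivative_iff_has_vector_derivative)
  qed (auto intro: cont_Hf)
  then show ?thesis by (simp add: Hf_def)
qed

definition fI :: "nat \<Rightarrow> real" where "fI k = integral {0..1} (phi k)"

lemma fI_rec: "fI (Suc k) + fI k - real k * fI (k-1) = 0^k * exp (-1/2)"
proof -
  have "((\<lambda>t. phi (Suc k) t + phi k t - real k * phi (k-1) t) has_integral (fI (Suc k) + fI k - real k * fI (k-1))) {0..1}"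
    unfolding fI_def by (intro has_integral_diff has_integral_add has_integral_mult_right integrable_integral int_phi)
  then show ?thesis using ftc_k[of k] by (rule has_integral_unique)
qed

lemma fI_nonneg: "fI k \<ge> 0"
  unfolding fI_def
proof (rule integral_nonneg[OF int_phi])
  fix x :: real assume x: "x \<in> {0..1}"
  show "0 \<le> phi k x"
  proof (cases "x = 0")
    case False
    then have "1 \<le> 1/x" using x by (simp add: le_divide_eq)
    then have "0 \<le> 1/x - 1" by simp
    then show ?thesis using x unfolding phi_def by (intro divide_nonneg_nonneg mult_nonneg_nonneg zero_le_power) auto
  qed (simp add: phi_def)
qed

lemma fI0: "z = exp (1/2) * fI 0"
  unfolding z_def fI_def phi_def by simp

fun aa :: "nat \<Rightarrow> real" where
  "aa 0 = 1" | "aa (Suc 0) = 1" | "aa (Suc (Suc k)) = real (Suc k) * aa k + aa (Suc k)"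

fun dd :: "nat \<Rightarrow> real" where
  "dd 0 = 1" | "dd (Suc 0) = 1" | "dd (Suc (Suc k)) = real (Suc k) * dd k"

lemma dd_pos: "dd k > 0"
  by (induction k rule: dd.induct) auto

lemma dd_mono: "dd k \<le> dd (Suc k) \<and> dd (Suc k) \<le> real (Suc k) * dd k"
proof (induction k)
  case (Suc k)
  have "real (Suc k) * dd k \<le> real (Suc k) * dd (Suc k)" using Suc by (intro mult_left_mono) auto
  then show ?case using Suc dd_pos[of "Suc k"] by (auto simp: algebra_simps)
qed simp

lemma fI_rec0: "fI 1 + fI 0 = exp (-1/2)"
  using fI_rec[of 0] by simp

lemma fI_rec2: "fI (Suc (Suc k)) + fI (Suc k) = real (Suc k) * fI k"
  using fI_rec[of "Suc k"] by simp

lemma fI_le: "fI k \<le> exp (-1/2) * dd k"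
proof (induction k rule: dd.induct)
  case 1 then show ?case using fI_rec0 fI_nonneg[of 1] by simp
next
  case 2 then show ?case using fI_rec0 fI_nonneg[of 0] by simp
next
  case (3 k)
  have "fI (Suc (Suc k)) \<le> real (Suc k) * fI k" using fI_rec2[of k] fI_nonneg[of "Suc k"] by simp
  also have "\<dots> \<le> real (Suc k) * (exp (-1/2) * dd k)" using 3 by (intro mult_left_mono) auto
  finally show ?case by (simp add: mult_ac)
qed

lemma aa_ge: "aa k \<ge> dd k \<and> aa k \<ge> dd k * harm (Suc k) / 2"
proof (induction k rule: aa.induct)
  case 1 then show ?case by (simp add: harm_def)
next
  case 2 then show ?case by (simp add: harm_def)
next
  case (3 k)
  have d1: "dd (Suc (Suc k)) \<le> real (Suc (Suc k)) * dd (Suc k)" using dd_mono[of "Suc k"] by simp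
  have hp: "harm (Suc k) \<ge> (0::real)" by (simp add: harm_nonneg)
  have A: "aa (Suc (Suc k)) \<ge> dd (Suc (Suc k))"
  proof -
    have "real (Suc k) * dd k \<le> real (Suc k) * aa k" using 3 by (intro mult_left_mono) auto
    moreover have "aa (Suc k) \<ge> 0" using 3 dd_pos[of "Suc k"] by linarith
    ultimately show ?thesis by (simp only: aa.simps dd.simps)
  qed
  have F1: "aa (Suc (Suc k)) \<ge> real (Suc k) * (dd k * harm (Suc k) / 2) + dd (Suc k)"
  proof -
    have "real (Suc k) * (dd k * harm (Suc k) / 2) \<le> real (Suc k) * aa k"
      using 3 by (intro mult_left_mono) auto
    then show ?thesis using 3 by (simp only: aa.simps) linarith
  qed
  have F2: "dd (Suc k) \<ge> dd (Suc (Suc k)) / real (Suc (Suc k))"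
    using d1 by (simp add: divide_le_eq mult.commute del: of_nat_Suc)
  have F3: "harm (Suc (Suc (Suc k))) / 2 \<le> harm (Suc k) / 2 + 1 / real (Suc (Suc k))"
  proof -
    define a :: real where "a = 1 / real (Suc (Suc k))"
    define b :: real where "b = 1 / real (Suc (Suc (Suc k)))"
    have e: "harm (Suc (Suc (Suc k))) = harm (Suc k) + a + b"
      by (simp add: harm_Suc inverse_eq_divide a_def b_def)
    have "b \<le> a" unfolding a_def b_def
      by (intro divide_left_mono) auto
    then show ?thesis unfolding e a_def[symmetric] by (simp add: field_simps)
  qed
  have E: "dd (Suc (Suc k)) * (harm (Suc k) / 2 + 1 / real (Suc (Suc k)))
     = real (Suc k) * (dd k * harm (Suc k) / 2) + dd (Suc (Suc k)) / real (Suc (Suc k))"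
    by (simp only: dd.simps) (simp add: algebra_simps)
  have G: "aa (Suc (Suc k)) \<ge> dd (Suc (Suc k)) * (harm (Suc k) / 2 + 1 / real (Suc (Suc k)))"
    unfolding E using F1 F2 by linarith
  have "dd (Suc (Suc k)) * (harm (Suc k) / 2 + 1 / real (Suc (Suc k))) \<ge> dd (Suc (Suc k)) * (harm (Suc (Suc (Suc k))) / 2)"
    using F3 dd_pos[of "Suc (Suc k)"] by (intro mult_left_mono) auto
  moreover have "dd (Suc (Suc k)) * harm (Suc (Suc (Suc k))) / 2 = dd (Suc (Suc k)) * (harm (Suc (Suc (Suc k))) / 2)" by simp
  ultimately have "aa (Suc (Suc k)) \<ge> dd (Suc (Suc k)) * harm (Suc (Suc (Suc k))) / 2" using G by linarith
  then show ?case using A by linarith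
qed

lemma ratio_lim: "(\<lambda>N. fI N / aa N) \<longlonglongrightarrow> 0"
proof (rule tendsto_sandwich[OF _ _ tendsto_const])
  have "filterlim (\<lambda>N. harm (Suc N) :: real) at_top sequentially"
    by (rule filterlim_compose[OF harm_at_top filterlim_Suc])
  from filterlim_at_top_imp_at_infinity[OF this]
  show "(\<lambda>N. 2 * exp (-1/2) / harm (Suc N) :: real) \<longlonglongrightarrow> 0"
    by (rule tendsto_divide_0[OF tendsto_const])
  show "eventually (\<lambda>N. (0::real) \<le> fI N / aa N) sequentially"
  proof (intro always_eventually allI)
    fix N
    have "aa N \<ge> 0" using aa_ge[of N] dd_pos[of N] by linarith
    then show "0 \<le> fI N / aa N" using fI_nonneg[of N] by simp
  qed
  show "eventually (\<lambda>N. fI N / aa N \<le> 2 * exp (-1/2) / harm (Suc N)) sequentially"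
  proof (intro always_eventually allI)
    fix N
    have hp: "harm (Suc N) > (0::real)" by (simp add: harm_pos)
    have "fI N / aa N \<le> exp (-1/2) * dd N / (dd N * harm (Suc N) / 2)"
      using fI_le[of N] aa_ge[of N] dd_pos[of N] hp fI_nonneg[of N]
      by (intro frac_le) auto
    also have "\<dots> = 2 * exp (-1/2) / harm (Suc N)" using dd_pos[of N] by (simp add: field_simps)
    finally show "fI N / aa N \<le> 2 * exp (-1/2) / harm (Suc N)" .
  qed
qed

declare cf_tail.simps[simp del]

lemma cf_tail_N: "cf_tail N N = 1 + real N"
  by (subst cf_tail.simps) simp

lemma cf_tail_lt: "k < N \<Longrightarrow> cf_tail N k = 1 + real k / cf_tail N (Suc k)"
  by (subst cf_tail.simps) simp

lemma R_from_sol: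
  fixes h :: "nat \<Rightarrow> real"
  assumes N: "1 \<le> N"
    and rec: "\<And>k. h (Suc (Suc k)) + h (Suc k) = real (Suc k) * h k"
    and hN: "h (Suc N) = 0"
    and h01: "h 0 + h 1 \<noteq> 0"
  shows "R N = h 0 / (h 0 + h 1)"
proof -
  have bk: "\<And>k. h k = (h (Suc (Suc k)) + h (Suc k)) / real (Suc k)"
    using rec by (simp add: field_simps del: of_nat_Suc)
  have nz: "h N \<noteq> 0"
  proof
    assume h0: "h N = 0"
    have "h n = 0 \<and> h (Suc n) = 0" if "n \<le> N" for n
      using that
    proof (induction rule: inc_induct)
      case base then show ?case using h0 hN by simp
    next
      case (step n) then show ?case using bk[of n] by simp
    qed
    from this[of 0] show False using h01 by simp
  qed
  have pos: "h N * h n > 0 \<and> h N * h (Suc n) \<ge> 0" if "n \<le> N" for n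
    using that
  proof (induction rule: inc_induct)
    case base then show ?case using nz hN by (auto simp: zero_less_mult_iff)
  next
    case (step n)
    have "h N * h n = (h N * h (Suc (Suc n)) + h N * h (Suc n)) / real (Suc n)"
      by (subst bk) (simp add: field_simps del: of_nat_Suc)
    also have "\<dots> > 0" using step by (intro divide_pos_pos) auto
    finally show ?case using step by simp
  qed
  have hnz: "h n \<noteq> 0" if "n \<le> N" for n using pos[OF that] by auto
  have cf: "cf_tail N j = (h (j-1) + h j) / h (j-1)" if "1 \<le> j" "j \<le> N" for j
    using that(2,1)
  proof (induction rule: inc_induct)
    case base
    obtain m where m: "N = Suc m" using N by (cases N) auto
    have "h N = real N * h m" using rec[of m] hN m by simp
    then show ?case using hnz[of m] m by (simp add: cf_tail_N field_simps)
  next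
    case (step n)
    obtain m where m: "n = Suc m" using step by (cases n) auto
    have r: "h (Suc n) + h n = real n * h m" using rec[of m] m by simp
    have "cf_tail N n = 1 + real n / ((h n + h (Suc n)) / h n)"
      using step by (simp add: cf_tail_lt)
    also have "\<dots> = 1 + real n * h n / (real n * h m)"
      using r hnz[of n] step by (simp add: algebra_simps)
    also have "\<dots> = 1 + h n / h m"
      using m by (simp del: of_nat_Suc)
    also have "\<dots> = (h (n-1) + h n) / h (n-1)"
      using m hnz[of m] step by (simp add: field_simps)
    finally show ?case .
  qed
  have "cf_tail N 1 = (h 0 + h 1) / h 0" using cf[of 1] N by simp
  then show ?thesis unfolding R_def using hnz[of 0] by simp
qed

definition gg :: "nat \<Rightarrow> real" where "gg k = (-1)^k * aa k"

lemma aa_pos: "aa k > 0" using aa_ge[of k] dd_pos[of k] by linarith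

lemma gg_rec: "gg (Suc (Suc k)) + gg (Suc k) = real (Suc k) * gg k"
  unfolding gg_def by (simp only: aa.simps) (simp add: algebra_simps)

lemma R_eq:
  assumes N: "1 \<le> N"
  shows "R N = z - exp (1/2) * (fI (Suc N) / gg (Suc N))"
proof -
  define c where "c = fI (Suc N) / gg (Suc N)"
  define h where "h k = fI k - c * gg k" for k
  have gnz: "gg (Suc N) \<noteq> 0" using aa_pos[of "Suc N"] by (simp add: gg_def)
  have rec: "h (Suc (Suc k)) + h (Suc k) = real (Suc k) * h k" for k
  proof -
    have e2: "c * gg (Suc (Suc k)) + c * gg (Suc k) = real (Suc k) * (c * gg k)"
      using gg_rec[of k] by (metis distrib_left mult.left_commute)
    show ?thesis unfolding h_def right_diff_distrib using fI_rec2[of k] e2 by linarith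
  qed
  have hN: "h (Suc N) = 0" unfolding h_def c_def using gnz by simp
  have h01: "h 0 + h 1 = exp (-1/2)"
    unfolding h_def using fI_rec0 by (simp add: gg_def)
  have "R N = h 0 / (h 0 + h 1)"
    by (rule R_from_sol[OF N rec hN]) (use h01 in \<open>simp add: One_nat_def\<close>)
  also have "\<dots> = exp (1/2) * (fI 0 - c)"
    unfolding h01 by (simp add: h_def gg_def exp_minus field_simps)
  also have "\<dots> = z - exp (1/2) * c" by (simp add: fI0 algebra_simps)
  finally show ?thesis by (simp add: c_def)
qed

theorem mainTheorem5:
  shows "R \<longlonglongrightarrow> z"
proof -
  have r: "(\<lambda>N. fI (Suc N) / aa (Suc N)) \<longlonglongrightarrow> 0"
    using ratio_lim by (rule LIMSEQ_Suc)
  have "(\<lambda>N. fI (Suc N) / gg (Suc N)) \<longlonglongrightarrow> 0"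
  proof (rule tendsto_rabs_zero_cancel)
    have "\<bar>fI (Suc N) / gg (Suc N)\<bar> = fI (Suc N) / aa (Suc N)" for N
      using fI_nonneg[of "Suc N"] aa_pos[of "Suc N"] by (simp add: gg_def abs_mult)
    then show "(\<lambda>N. \<bar>fI (Suc N) / gg (Suc N)\<bar>) \<longlonglongrightarrow> 0" using r by simp
  qed
  then have "(\<lambda>N. z - exp (1/2) * (fI (Suc N) / gg (Suc N))) \<longlonglongrightarrow> z - exp (1/2) * 0"
    by (intro tendsto_intros)
  then have L: "(\<lambda>N. z - exp (1/2) * (fI (Suc N) / gg (Suc N))) \<longlonglongrightarrow> z" by simp
  have "eventually (\<lambda>N. z - exp (1/2) * (fI (Suc N) / gg (Suc N)) = R N) sequentially"
    using eventually_ge_at_top[of 1] by eventually_elim (simp add: R_eq)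
  then show ?thesis using L by (rule tendsto_cong[THEN iffD1])
qed

end
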